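(* For every constant $\epsilon>0$ there exist a constant $C_\epsilon$ and a family of DAGs $\{G_n^\epsilon\}_{n\ge 2}$, where $G_n^\epsilon$ has $n$ nodes and maximum indegree at most $C_\epsilon\log n$, such that for every $n$, $G_n^\epsilon$ is $(e,d)$-depth-robust for all integers $e,d\ge0$ with $e+d\le(1-\epsilon)n$.
   Context: For a DAG $G$, $\mathsf{depth}(G)$ is the number of nodes on a longest directed path; $G-S$ is $G$ with the nodes of $S$ and incident edges removed. $G$ is $(e,d)$-depth-robust if $\mathsf{depth}(G-S)\ge d$ for every node set $S$ with $|S|\le e$. *)

theory Defs
  imports "HOL-Analysis.Analysis"
begin

definition is_dag :: "'a set \<Rightarrow> ('a \<times> 'a) set \<Rightarrow> bool" where
  "is_dag V E \<longleftrightarrow> finite V \<and> E \<subseteq> V \<times> V \<and> acyclic E"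

definition is_path :: "'a set \<Rightarrow> ('a \<times> 'a) set \<Rightarrow> 'a list \<Rightarrow> bool" where
  "is_path V E p \<longleftrightarrow> p \<noteq> [] \<and> set p \<subseteq> V \<and> (\<forall>i. Suc i < length p \<longrightarrow> (p ! i, p ! Suc i) \<in> E)"

text \<open>Number of nodes on a longest directed path of the subgraph induced by V (0 if V is empty).\<close>
definition depth :: "'a set \<Rightarrow> ('a \<times> 'a) set \<Rightarrow> nat" where
  "depth V E = Sup {length p | p. is_path V E p}"

definition indegree :: "('a \<times> 'a) set \<Rightarrow> 'a \<Rightarrow> nat" where
  "indegree E v = card {u. (u, v) \<in> E}"

definition depth_robust :: "'a set \<Rightarrow> ('a \<times> 'a) set \<Rightarrow> nat \<Rightarrow> nat \<Rightarrow> bool" where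
  "depth_robust V E e d \<longleftrightarrow> (\<forall>S. S \<subseteq> V \<longrightarrow> card S \<le> e \<longrightarrow> depth (V - S) E \<ge> d)"

end

theory Submission
  imports Defs
begin


lemma is_path_single[simp]: "is_path V E [x] \<longleftrightarrow> x \<in> V"
  by (auto simp: is_path_def)

lemma is_path_Nil[simp]: "\<not> is_path V E []"
  by (auto simp: is_path_def)

lemma is_path_Cons2: "is_path V E (x # y # p) \<longleftrightarrow> x \<in> V \<and> (x,y) \<in> E \<and> is_path V E (y # p)"
proof
  assume h: "is_path V E (x # y # p)"
  have hh: "\<forall>i. Suc i < length (x#y#p) \<longrightarrow> ((x#y#p)!i, (x#y#p)!Suc i) \<in> E" "set (x#y#p) \<subseteq> V"
    using h unfolding is_path_def by blast+
  have "(x,y) \<in> E" using hh(1)[rule_format, of 0] by simp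
  moreover have "is_path V E (y # p)" unfolding is_path_def
  proof (intro conjI allI impI)
    show "y # p \<noteq> []" by simp
    show "set (y # p) \<subseteq> V" using hh(2) by simp
    fix i assume "Suc i < length (y # p)"
    then show "((y # p) ! i, (y # p) ! Suc i) \<in> E" using hh(1)[rule_format, of "Suc i"] by simp
  qed
  ultimately show "x \<in> V \<and> (x,y) \<in> E \<and> is_path V E (y # p)" using hh(2) by simp
next
  assume h: "x \<in> V \<and> (x,y) \<in> E \<and> is_path V E (y # p)"
  show "is_path V E (x # y # p)" unfolding is_path_def
  proof (intro conjI allI impI)
    show "x # y # p \<noteq> []" by simp
    show "set (x # y # p) \<subseteq> V" using h by (auto simp: is_path_def)
    fix i assume "Suc i < length (x # y # p)"
    then show "((x # y # p) ! i, (x # y # p) ! Suc i) \<in> E" using h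
      by (cases i) (auto simp: is_path_def)
  qed
qed

lemma is_path_append:
  "is_path V E p \<Longrightarrow> is_path V E q \<Longrightarrow> last p = hd q \<Longrightarrow> is_path V E (p @ tl q)"
proof (induction p)
  case Nil then show ?case by simp
next
  case (Cons x p)
  show ?case
  proof (cases p)
    case Nil
    then show ?thesis using Cons.prems by (cases q) auto
  next
    case (Cons y p')
    with Cons.prems have "x \<in> V" "(x,y) \<in> E" "is_path V E p" by (auto simp: is_path_Cons2)
    with Cons.IH Cons.prems \<open>p = y # p'\<close> have "is_path V E (y # (p' @ tl q))" by simp
    then show ?thesis using \<open>x \<in> V\<close> \<open>(x,y) \<in> E\<close> \<open>p = y # p'\<close> by (simp add: is_path_Cons2)
  qed
qed

lemma path_from_rtrancl:
  assumes "(a,b) \<in> (E \<inter> (T \<times> T))\<^sup>*" "a \<in> T"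
  shows "\<exists>p. is_path T E p \<and> hd p = a \<and> last p = b"
  using assms(1)
proof (induction rule: rtrancl_induct)
  case base then show ?case using assms(2) by (intro exI[of _ "[a]"]) simp
next
  case (step b c)
  then obtain p where p: "is_path T E p" "hd p = a" "last p = b" by blast
  have "is_path T E [b, c]" using step by (auto simp: is_path_Cons2)
  then have "is_path T E (p @ tl [b,c])" using p by (intro is_path_append) auto
  moreover have "p \<noteq> []" using p by auto
  ultimately show ?case using p by (intro exI[of _ "p @ [c]"]) auto
qed

lemma path_sorted:
  assumes "\<forall>(a,b)\<in>E. a < b"
  shows "is_path V E (p :: nat list) \<Longrightarrow> sorted_wrt (<) p"
proof (induction p)
  case Nil then show ?case by simp
next
  case (Cons x p)
  show ?case
  proof (cases p)
    case Nil then show ?thesis by simp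
  next
    case (Cons y p')
    with Cons.prems have h: "(x,y) \<in> E" "is_path V E p" by (auto simp: is_path_Cons2)
    then have s: "sorted_wrt (<) p" using Cons.IH by simp
    have "x < y" using h assms by auto
    then have "\<forall>z\<in>set p. x < z" using s \<open>p = y # p'\<close> by auto
    then show ?thesis using s by simp
  qed
qed

lemma path_length_le:
  assumes "\<forall>(a,b)\<in>E. a < b" "is_path V E (p :: nat list)" "finite V"
  shows "length p \<le> card V"
proof -
  have "distinct p" using path_sorted[OF assms(1) assms(2)] strict_sorted_iff by blast
  then have "length p = card (set p)" by (simp add: distinct_card)
  also have "\<dots> \<le> card V" using assms(2,3) by (intro card_mono) (auto simp: is_path_def)
  finally show ?thesis .
qed

lemma chain_path:
  fixes C :: "nat set"
  assumes "finite C" "C \<subseteq> T"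
    and "\<forall>u\<in>C. \<forall>v\<in>C. u < v \<longrightarrow> (u,v) \<in> (E \<inter> (T \<times> T))\<^sup>*"
  shows "C \<noteq> {} \<longrightarrow> (\<exists>p. is_path T E p \<and> C \<subseteq> set p \<and> last p = Max C)"
  using assms
proof (induction C rule: finite_linorder_max_induct)
  case empty then show ?case by simp
next
  case (insert b A)
  show ?case
  proof (cases "A = {}")
    case True then show ?thesis using insert by (intro impI exI[of _ "[b]"]) auto
  next
    case False
    with insert obtain p where p: "is_path T E p" "A \<subseteq> set p" "last p = Max A" by auto
    have mA: "Max A \<in> A" "Max A < b" using False insert by auto
    then have "(Max A, b) \<in> (E \<inter> (T \<times> T))\<^sup>*" using insert.prems by auto
    then obtain q where q: "is_path T E q" "hd q = Max A" "last q = b"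
      using path_from_rtrancl[of "Max A" b E T] mA insert.prems by auto
    have "q \<noteq> []" using q by auto
    have "tl q \<noteq> []" using q mA \<open>q \<noteq> []\<close> by (cases q) auto
    have "is_path T E (p @ tl q)" using p q by (intro is_path_append) auto
    moreover have "last (p @ tl q) = b" using \<open>tl q \<noteq> []\<close> q \<open>q \<noteq> []\<close> by (cases q) auto
    moreover have "insert b A \<subseteq> set (p @ tl q)"
    proof -
      have "b \<in> set (tl q)" using \<open>tl q \<noteq> []\<close> q \<open>q \<noteq> []\<close> by (cases q) auto
      then show ?thesis using p by auto
    qed
    moreover have "Max (insert b A) = b" using insert by (simp add: Max_insert False mA)
    ultimately show ?thesis by metis
  qed
qed


lemma rho_pow:
  fixes m :: nat assumes "m \<ge> 2"
  shows "((real m - 1) / real m) ^ m \<le> 1/2"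
proof -
  have m1: "real m - 1 > 0" using assms by simp
  have "1 + real m * (1 / (real m - 1)) \<le> (1 + 1 / (real m - 1)) ^ m"
  proof (rule Bernoulli_inequality)
    have "0 \<le> 1 / (real m - 1)" using m1 by simp
    then show "-1 \<le> 1 / (real m - 1)" by linarith
  qed
  moreover have "1 + 1 / (real m - 1) = real m / (real m - 1)" using m1 by (simp add: field_simps)
  moreover have "1 + real m * (1 / (real m - 1)) \<ge> 2" using m1 by (simp add: field_simps)
  ultimately have "2 \<le> (1 + 1 / (real m - 1)) ^ m" by linarith
  then have "2 \<le> (real m / (real m - 1)) ^ m"
    using \<open>1 + 1 / (real m - 1) = real m / (real m - 1)\<close> by simp
  moreover have "((real m - 1) / real m) ^ m = 1 / (real m / (real m - 1)) ^ m"
    by (simp add: power_divide)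
  moreover have "1 / (real m / (real m - 1)) ^ m \<le> 1 / 2" if "2 \<le> (real m / (real m - 1)) ^ m"
    using that by (intro divide_left_mono) auto
  ultimately show ?thesis by simp
qed

lemma key_ineq:
  fixes N x y m D :: nat
  assumes "m \<ge> 2" "N \<le> m*x" "N \<le> m*y" "x \<le> N" "D = 3*m^2" "N \<ge> 1"
  shows "8^N * (N-x)^(y*D) \<le> N^(y*D)"
proof -
  define \<rho> where "\<rho> = (real m - 1) / real m"
  have mpos: "real m > 0" using assms by simp
  have \<rho>0: "0 \<le> \<rho>" "\<rho> \<le> 1" using assms by (auto simp: \<rho>_def field_simps)
  have q: "real (N - x) \<le> real N * \<rho>"
  proof -
    have "real (N-x) * real m \<le> real N * (real m - 1)"
      using assms(2,4) by (simp add: of_nat_diff algebra_simps) (metis of_nat_le_iff of_nat_mult)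
    then show ?thesis using mpos by (simp add: \<rho>_def field_simps)
  qed
  have e: "3 * m * N \<le> y * D"
  proof -
    have "3*m*N \<le> 3*m*(m*y)" using assms(3) by simp
    also have "\<dots> = y * D" using assms(5) by (simp add: power2_eq_square)
    finally show ?thesis .
  qed
  have "real (N-x) ^ (y*D) \<le> (real N * \<rho>) ^ (y*D)"
    by (rule power_mono[OF q]) simp
  also have "\<dots> = real N ^ (y*D) * \<rho> ^ (y*D)" by (simp add: power_mult_distrib)
  also have "\<rho> ^ (y*D) \<le> \<rho> ^ (3*m*N)" by (rule power_decreasing[OF e \<rho>0])
  then have "real N ^ (y*D) * \<rho> ^ (y*D) \<le> real N ^ (y*D) * \<rho> ^ (3*m*N)"
    by (simp add: mult_left_mono)
  also have "\<rho> ^ (3*m*N) = (\<rho> ^ m) ^ (3*N)" by (simp add: power_mult[symmetric] mult.commute mult.left_commute)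
  also have "(\<rho> ^ m) ^ (3*N) \<le> (1/2) ^ (3*N)"
    by (rule power_mono) (use rho_pow[OF assms(1)] \<rho>0 in \<open>auto simp: \<rho>_def\<close>)
  also have "(1/2::real) ^ (3*N) = 1 / 8^N" by (simp add: power_mult power_one_over)
  finally have "real (N-x) ^ (y*D) \<le> real N ^ (y*D) * (1 / 8^N)"
    by (simp add: mult_left_mono)
  then have "8^N * real (N-x) ^ (y*D) \<le> real N ^ (y*D)" by (simp add: field_simps)
  then have "real (8^N * (N-x)^(y*D)) \<le> real (N^(y*D))" by simp
  then show ?thesis by (simp only: of_nat_le_iff)
qed

lemma expander_exists:
  fixes A B :: "nat set" and N m :: nat
  assumes "finite A" "card A = N" "N \<ge> 1" "finite B" "card B \<le> N" "m \<ge> 2"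
  shows "\<exists>H \<subseteq> A \<times> B. (\<forall>y. card {x. (x,y) \<in> H} \<le> 3*m^2) \<and>
     (\<forall>X Y. X \<subseteq> A \<longrightarrow> Y \<subseteq> B \<longrightarrow> N \<le> m*card X \<longrightarrow> N \<le> m*card Y \<longrightarrow> (\<exists>x\<in>X. \<exists>y\<in>Y. (x,y) \<in> H))"
proof -
  define D where "D = 3*m^2"
  define I where "I = B \<times> {..<D}"
  define \<Omega> where "\<Omega> = PiE I (\<lambda>_. A)"
  define P where "P = {(X,Y). X \<subseteq> A \<and> Y \<subseteq> B \<and> N \<le> m*card X \<and> N \<le> m*card Y}"
  define Bad where "Bad = (\<lambda>(X,Y). PiE I (\<lambda>p. if fst p \<in> Y then A - X else A))"
  have fI: "finite I" using assms by (simp add: I_def)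
  have cI: "card I = card B * D" by (simp add: I_def card_cartesian_product)
  have cO: "card \<Omega> = N ^ (card B * D)"
    using fI by (simp add: \<Omega>_def card_PiE assms(2) cI)
  have cP: "card P \<le> 4^N"
  proof -
    have "P \<subseteq> Pow A \<times> Pow B" by (auto simp: P_def)
    then have "card P \<le> card (Pow A \<times> Pow B)" using assms by (intro card_mono) auto
    also have "\<dots> = 2^N * 2^card B" using assms by (simp add: card_cartesian_product card_Pow)
    also have "\<dots> \<le> 2^N * 2^N" using assms by (intro mult_left_mono power_increasing) auto
    also have "\<dots> = 4^N" by (simp add: power_mult_distrib[symmetric])
    finally show ?thesis .
  qed
  have fP: "finite P"
  proof -
    have "P \<subseteq> Pow A \<times> Pow B" by (auto simp: P_def)
    then show ?thesis using assms by (meson finite_Pow_iff finite_SigmaI finite_subset)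
  qed
  have cBad: "8^N * card (Bad p) \<le> card \<Omega>" if "p \<in> P" for p
  proof -
    obtain X Y where p: "p = (X,Y)" "X \<subseteq> A" "Y \<subseteq> B" "N \<le> m*card X" "N \<le> m*card Y"
      using \<open>p \<in> P\<close> by (auto simp: P_def)
    have fX: "finite X" "finite Y" using p assms finite_subset by auto
    have "card (Bad p) = (\<Prod>q\<in>I. card (if fst q \<in> Y then A - X else A))"
      using fI by (simp add: Bad_def p card_PiE)
    also have "\<dots> = (\<Prod>q\<in>I. if fst q \<in> Y then N - card X else N)"
      using p assms fX by (intro prod.cong) (auto simp: card_Diff_subset)
    also have "\<dots> = (\<Prod>q\<in>I \<inter> {q. fst q \<in> Y}. N - card X) * (\<Prod>q\<in>I \<inter> -{q. fst q \<in> Y}. N)"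
      using fI by (simp add: prod.If_cases)
    also have "I \<inter> {q. fst q \<in> Y} = Y \<times> {..<D}" using p by (auto simp: I_def)
    also have "I \<inter> -{q. fst q \<in> Y} = (B - Y) \<times> {..<D}" by (auto simp: I_def)
    finally have cb: "card (Bad p) = (N - card X) ^ (card Y * D) * N ^ (card (B - Y) * D)"
      by (simp add: card_cartesian_product)
    have cBY: "card B = card Y + card (B - Y)" using p fX assms
      by (metis add_diff_inverse_nat card_Diff_subset card_mono not_less)
    have "card X \<le> N" using p assms by (metis card_mono)
    then have k: "8^N * (N - card X) ^ (card Y * D) \<le> N ^ (card Y * D)"
      using key_ineq[of m N "card X" "card Y" D] p assms D_def by auto
    have "8^N * card (Bad p) = (8^N * (N - card X) ^ (card Y * D)) * N ^ (card (B - Y) * D)"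
      by (simp add: cb)
    also have "\<dots> \<le> N ^ (card Y * D) * N ^ (card (B - Y) * D)"
      using k by (rule mult_right_mono) simp
    also have "\<dots> = card \<Omega>" by (simp add: cO cBY power_add[symmetric] algebra_simps)
    finally show ?thesis .
  qed
  have "8^N * card (\<Union>p\<in>P. Bad p) \<le> 8^N * (\<Sum>p\<in>P. card (Bad p))"
    by (intro mult_left_mono card_UN_le fP) simp
  also have "\<dots> = (\<Sum>p\<in>P. 8^N * card (Bad p))" by (simp add: sum_distrib_left)
  also have "\<dots> \<le> (\<Sum>p\<in>P. card \<Omega>)" by (intro sum_mono cBad)
  also have "\<dots> = card P * card \<Omega>" by simp
  also have "\<dots> \<le> 4^N * card \<Omega>" using cP by (simp add: mult_right_mono)
  also have "\<dots> < 8^N * card \<Omega>"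
  proof -
    have "card \<Omega> > 0" using cO assms by simp
    moreover have "(4::nat)^N < 8^N" using assms by (intro power_strict_mono) auto
    ultimately show ?thesis by simp
  qed
  finally have "card (\<Union>p\<in>P. Bad p) < card \<Omega>" by simp
  moreover have "finite (\<Union>p\<in>P. Bad p)"
  proof (intro finite_UN_I fP)
    fix p assume "p \<in> P"
    obtain X Y where "p = (X,Y)" by force
    have "finite (PiE I (\<lambda>q. if fst q \<in> Y then A - X else A))"
      by (rule finite_PiE[OF fI]) (use assms(1) in auto)
    then show "finite (Bad p)" by (simp add: Bad_def \<open>p = (X,Y)\<close>)
  qed
  ultimately have "\<not> \<Omega> \<subseteq> (\<Union>p\<in>P. Bad p)"
    using card_mono by (metis not_le)
  then obtain g where g: "g \<in> \<Omega>" "g \<notin> (\<Union>p\<in>P. Bad p)" by blast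
  define H where "H = {(g (y,k), y) | y k. y \<in> B \<and> k < D}"
  have HAB: "H \<subseteq> A \<times> B" using g by (auto simp: H_def \<Omega>_def I_def PiE_def Pi_def)
  moreover have Hdeg: "card {x. (x,y) \<in> H} \<le> 3*m^2" for y
  proof -
    have "{x. (x,y) \<in> H} \<subseteq> (\<lambda>k. g (y,k)) ` {..<D}" by (auto simp: H_def)
    then have "card {x. (x,y) \<in> H} \<le> card ((\<lambda>k. g (y,k)) ` {..<D})" by (intro card_mono) auto
    also have "\<dots> \<le> D" by (metis card_image_le card_lessThan finite_lessThan)
    finally show ?thesis by (simp add: D_def)
  qed
  moreover have Hexp: "\<exists>x\<in>X. \<exists>y\<in>Y. (x,y) \<in> H"
    if "X \<subseteq> A" "Y \<subseteq> B" "N \<le> m*card X" "N \<le> m*card Y" for X Y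
  proof -
    have "(X,Y) \<in> P" using that by (simp add: P_def)
    then have "g \<notin> Bad (X,Y)" using g by auto
    then have n: "g \<notin> PiE I (\<lambda>q. if fst q \<in> Y then A - X else A)" by (simp add: Bad_def)
    have ge: "g \<in> extensional I" "\<forall>q\<in>I. g q \<in> A" using g(1) by (auto simp: \<Omega>_def PiE_iff)
    obtain q where q: "q \<in> I" "g q \<notin> (if fst q \<in> Y then A - X else A)"
      using n ge by (auto simp: PiE_iff)
    then have "fst q \<in> Y" "g q \<in> X" using ge by (auto split: if_splits)
    moreover obtain y k where "q = (y,k)" by force
    ultimately show ?thesis using q by (auto simp: H_def I_def)
  qed
  show ?thesis
    apply (rule exI[of _ H])
    apply (intro conjI allI impI HAB Hdeg)
    apply (rule Hexp; assumption)
    done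
qed


definition blk :: "nat \<Rightarrow> nat \<Rightarrow> nat \<Rightarrow> nat set" where
  "blk n i j = {j*2^i ..< min ((j+1)*2^i) n}"

lemma blk_mem[simp]: "x \<in> blk n i j \<longleftrightarrow> j*2^i \<le> x \<and> x < (j+1)*2^i \<and> x < n"
  by (auto simp: blk_def)

definition LE :: "nat \<Rightarrow> nat \<Rightarrow> (nat \<times> nat) set \<Rightarrow> bool" where
  "LE n m E \<longleftrightarrow> (\<forall>i j X Y. (j+1)*2^i \<le> n \<longrightarrow> X \<subseteq> blk n i j \<longrightarrow> Y \<subseteq> blk n i (j+1) \<longrightarrow>
      2^i \<le> m * card X \<longrightarrow> 2^i \<le> m * card Y \<longrightarrow> (\<exists>x\<in>X. \<exists>y\<in>Y. (x,y) \<in> E))"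

lemma step_count:
  fixes T Rs W N :: "nat set"
  assumes "finite W" "finite N" "W \<inter> N = {}" "Rs \<subseteq> T"
    "m * card (T\<inter>W) \<le> m * card (Rs \<inter> W) + a" "m * card (T \<inter> N - Rs) \<le> b"
  shows "m * card (T \<inter> (W \<union> N)) \<le> m * card (Rs \<inter> (W \<union> N)) + a + b"
proof -
  have c1: "card (T \<inter> (W \<union> N)) = card (T\<inter>W) + card (T\<inter>N)"
    using assms(1-3) by (subst card_Un_disjoint[symmetric]) (auto intro: arg_cong[where f=card])
  have c2: "card (Rs \<inter> (W \<union> N)) = card (Rs\<inter>W) + card (Rs\<inter>N)"
    using assms(1-3) by (subst card_Un_disjoint[symmetric]) (auto intro: arg_cong[where f=card])
  have c3: "card (T\<inter>N) = card (Rs\<inter>N) + card (T\<inter>N - Rs)"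
  proof -
    have "T\<inter>N = (Rs\<inter>N) \<union> (T\<inter>N - Rs)" using assms(4) by auto
    then show ?thesis using assms(2) by (metis card_Un_disjoint Diff_disjoint finite_Diff finite_Int inf_commute Int_Diff)
  qed
  show ?thesis using assms(5,6) c1 c2 c3 by (simp add: algebra_simps)
qed

lemma sub_count:
  fixes T Rs F Z :: "nat set"
  assumes "finite F" "Z \<subseteq> F" "Rs \<subseteq> T"
  shows "card (T \<inter> Z) + card (Rs \<inter> F) \<le> card (Rs \<inter> Z) + card (T \<inter> F)"
proof -
  have fZ: "finite Z" using assms finite_subset by auto
  have "card (T \<inter> F) = card (T \<inter> Z) + card (T \<inter> (F - Z))"
    using assms fZ by (subst card_Un_disjoint[symmetric]) (auto intro: arg_cong[where f=card])
  moreover have "card (Rs \<inter> F) = card (Rs \<inter> Z) + card (Rs \<inter> (F - Z))"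
    using assms fZ by (subst card_Un_disjoint[symmetric]) (auto intro: arg_cong[where f=card])
  moreover have "card (Rs \<inter> (F - Z)) \<le> card (T \<inter> (F - Z))"
    using assms by (intro card_mono) auto
  ultimately show ?thesis by simp
qed

lemma div_facts:
  fixes u P :: nat assumes "P > 0"
  shows "u div P * P \<le> u" "u < u div P * P + P"
  using assms by (simp_all add: div_times_less_eq_dividend) (metis div_mult_mod_eq mod_less_divisor add_less_cancel_left)

locale conn =
  fixes n m K :: nat and E :: "(nat \<times> nat) set" and T :: "nat set"
  assumes LE: "LE n m E" and mK: "m = 8*K" and T: "T \<subseteq> {..<n}" and K1: "K \<ge> 1"
begin

definition Er where "Er = E \<inter> (T \<times> T)"
definition R where "R u = {w. (u,w) \<in> Er\<^sup>*}"
definition Q where "Q v = {w. (w,v) \<in> Er\<^sup>*}"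

definition fgood where
  "fgood u \<longleftrightarrow> u \<in> T \<and> (\<forall>r. 1 \<le> r \<longrightarrow> u + r \<le> n \<longrightarrow> r \<le> K * card (T \<inter> {u..<u+r}))"
definition bgood where
  "bgood v \<longleftrightarrow> v \<in> T \<and> (\<forall>r. 1 \<le> r \<longrightarrow> r \<le> v+1 \<longrightarrow> r \<le> K * card (T \<inter> {v+1-r..v}))"

lemma R_sub: "u \<in> T \<Longrightarrow> R u \<subseteq> T"
  unfolding R_def by (auto elim: rtranclE simp: Er_def)

lemma Q_sub: "v \<in> T \<Longrightarrow> Q v \<subseteq> T"
  unfolding Q_def by (auto elim: converse_rtranclE simp: Er_def)

lemma u_R: "u \<in> R u" by (simp add: R_def)
lemma v_Q: "v \<in> Q v" by (simp add: Q_def)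

lemma expand_fwd:
  assumes "u \<in> T" "X \<subseteq> R u" "X \<subseteq> blk n i j" "N \<subseteq> blk n i (j+1)" "(j+1)*2^i \<le> n" "2^i \<le> m * card X"
  shows "m * card (T \<inter> N - R u) < 2^i"
proof (rule ccontr)
  assume "\<not> ?thesis"
  then have "2^i \<le> m * card (T \<inter> N - R u)" by simp
  moreover have "T \<inter> N - R u \<subseteq> blk n i (j+1)" using assms by auto
  ultimately obtain x y where xy: "x \<in> X" "y \<in> T \<inter> N - R u" "(x,y) \<in> E"
    using LE assms unfolding LE_def by blast
  then have "x \<in> T" using R_sub assms by auto
  then have "(x,y) \<in> Er" using xy by (auto simp: Er_def)
  moreover have "(u,x) \<in> Er\<^sup>*" using xy assms by (auto simp: R_def)
  ultimately have "y \<in> R u" by (auto simp: R_def)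
  then show False using xy by auto
qed

lemma expand_bwd:
  assumes "v \<in> T" "X \<subseteq> Q v" "X \<subseteq> blk n i (j+1)" "N \<subseteq> blk n i j" "(j+1)*2^i \<le> n" "2^i \<le> m * card X"
  shows "m * card (T \<inter> N - Q v) < 2^i"
proof (rule ccontr)
  assume "\<not> ?thesis"
  then have "2^i \<le> m * card (T \<inter> N - Q v)" by simp
  moreover have "T \<inter> N - Q v \<subseteq> blk n i j" using assms by auto
  ultimately obtain y x where xy: "y \<in> T \<inter> N - Q v" "x \<in> X" "(y,x) \<in> E"
    using LE assms unfolding LE_def by blast
  then have "x \<in> T" using Q_sub assms by auto
  then have "(y,x) \<in> Er" using xy by (auto simp: Er_def)
  moreover have "(x,v) \<in> Er\<^sup>*" using xy assms by (auto simp: Q_def)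
  ultimately have "y \<in> Q v" by (auto simp: Q_def intro: converse_rtrancl_into_rtrancl)
  then show False using xy by auto
qed

end


context conn begin

lemma fwd:
  assumes fg: "fgood u"
  shows "(u div 2^i + 2)*2^i \<le> n \<Longrightarrow>
    m * card (T \<inter> {u..<(u div 2^i+2)*2^i}) \<le> m * card (R u \<inter> {u..<(u div 2^i+2)*2^i}) + 2*2^i"
proof (induction i)
  case 0
  have uT: "u \<in> T" using fg by (simp add: fgood_def)
  have "T \<inter> {u..<u+2} \<subseteq> R u \<inter> {u..<u+2}"
  proof
    fix w assume w: "w \<in> T \<inter> {u..<u+2}"
    show "w \<in> R u \<inter> {u..<u+2}"
    proof (cases "w = u")
      case True then show ?thesis using w u_R by auto
    next
      case False
      then have wu: "w = u+1" using w by auto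
      have "\<exists>x\<in>{u}. \<exists>y\<in>{u+1}. (x,y) \<in> E"
        using LE 0 K1 unfolding LE_def mK
        by (elim allE[of _ 0] allE[of _ u] allE[of _ "{u}"] allE[of _ "{u+1}"]) auto
      then have "(u,w) \<in> Er" using wu w uT by (auto simp: Er_def)
      then show ?thesis using w by (auto simp: R_def)
    qed
  qed
  then have "card (T \<inter> {u..<u+2}) \<le> card (R u \<inter> {u..<u+2})" by (intro card_mono) auto
  then have "m * card (T \<inter> {u..<u+2}) \<le> m * card (R u \<inter> {u..<u+2})" by (rule mult_le_mono2)
  then have "m * card (T \<inter> {u..<u+2}) \<le> m * card (R u \<inter> {u..<u+2}) + 2*2^0" by (rule trans_le_add1)
  moreover have "(u div 2^0 + 2)*2^0 = u+2" by simp
  ultimately show ?case by (simp only:)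
next
  case (Suc i)
  define P where "P = (2::nat)^i"
  define a where "a = u div P"
  define b where "b = a div 2"
  have P0: "P > 0" by (simp add: P_def)
  have hP: "(2::nat)^Suc i = 2*P" by (simp add: P_def)
  have ub: "u div 2^Suc i = b" by (simp only: power_Suc2 div_mult2_eq b_def a_def P_def)
  have au: "a*P \<le> u" "u < a*P + P" using div_facts[OF P0, of u] by (simp_all add: a_def)
  have ab: "a = 2*b \<or> a = 2*b+1" by (simp add: b_def) arith
  have n1: "(b+2)*(2*P) \<le> n" using Suc.prems[unfolded ub, unfolded hP] .
  have e1: "(a+2)*P \<le> (b+2)*(2*P)" using ab by (auto simp: algebra_simps)
  have ee: "(u div 2^Suc i + 2) * 2^Suc i = (b+2)*(2*P)" by (subst ub) (simp only: hP)
  define W where "W = {u..<(a+2)*P}"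
  have IH: "m * card (T \<inter> W) \<le> m * card (R u \<inter> W) + 2*P"
    using Suc.IH e1 n1 by (simp add: W_def a_def P_def)
  have uT: "u \<in> T" using fg by (simp add: fgood_def)
  have RT: "R u \<subseteq> T" using R_sub uT .
  have TW: "8*P \<le> m * card (T \<inter> W)"
  proof -
    define r where "r = (a+2)*P - u"
    have r1: "P \<le> r" "u + r = (a+2)*P" using au by (simp_all add: r_def algebra_simps)
    have "1 \<le> r" using r1 P0 by simp
    moreover have "u + r \<le> n" using r1 e1 n1 by simp
    ultimately have "r \<le> K * card (T \<inter> {u..<u+r})" using fg unfolding fgood_def by blast
    then have "r \<le> K * card (T \<inter> W)" using r1 by (simp add: W_def)
    then show ?thesis using r1 by (simp add: mK)
  qed
  have RW: "6*P \<le> m * card (R u \<inter> W)" using TW IH by simp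
  have fW: "finite W" by (simp add: W_def)
  show ?case
  proof (cases "a = 2*b")
    case True
    define N where "N = {(a+2)*P..<(a+4)*P}"
    have "finite N" by (simp add: N_def)
    have eq: "{u..<(b+2)*(2*P)} = W \<union> N" "W \<inter> N = {}"
      using au True by (auto simp: W_def N_def algebra_simps)
    have "m * card (T \<inter> N - R u) < 2^Suc i"
    proof (rule expand_fwd[OF uT, of "R u \<inter> W" _ b])
      show "R u \<inter> W \<subseteq> blk n (Suc i) b"
        using au True e1 n1 by (auto simp: hP P_def[symmetric] W_def algebra_simps)
      show "N \<subseteq> blk n (Suc i) (b + 1)"
        using au True n1 by (auto simp: hP P_def[symmetric] N_def algebra_simps)
      show "(b + 1) * 2 ^ Suc i \<le> n" using n1 by (simp add: hP P_def[symmetric] algebra_simps)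
      show "2 ^ Suc i \<le> m * card (R u \<inter> W)" using RW by (simp add: hP P_def[symmetric])
    qed auto
    then have "m * card (T \<inter> N - R u) \<le> 2*P" by (simp add: hP P_def[symmetric])
    then have "m * card (T \<inter> (W \<union> N)) \<le> m * card (R u \<inter> (W \<union> N)) + 2*P + 2*P"
      using step_count[OF fW _ eq(2) RT IH, of "2*P"] by (simp add: N_def[symmetric] less_imp_le \<open>finite N\<close>)
    then show ?thesis unfolding ee using eq by (simp add: hP P_def[symmetric])
  next
    case False
    then have odd: "a = 2*b+1" using ab by simp
    define N where "N = {(a+2)*P..<(a+3)*P}"
    have "finite N" by (simp add: N_def)
    have eq: "{u..<(b+2)*(2*P)} = W \<union> N" "W \<inter> N = {}"
      using au odd by (auto simp: W_def N_def algebra_simps)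
    define X1 where "X1 = R u \<inter> {u..<(a+1)*P}"
    define X2 where "X2 = R u \<inter> {(a+1)*P..<(a+2)*P}"
    have cX: "card (R u \<inter> W) = card X1 + card X2"
    proof -
      have "R u \<inter> W = X1 \<union> X2" "X1 \<inter> X2 = {}" using au by (auto simp: W_def X1_def X2_def algebra_simps)
      moreover have "finite X1" "finite X2" by (auto simp: X1_def X2_def)
      ultimately show ?thesis by (simp add: card_Un_disjoint)
    qed
    have "m * card (T \<inter> N - R u) < 2*P"
    proof (cases "2*P \<le> m * card X1")
      case True
      have "m * card (T \<inter> N - R u) < 2^Suc i"
      proof (rule expand_fwd[OF uT, of X1 _ b])
        show "X1 \<subseteq> R u" by (auto simp: X1_def)
        show "X1 \<subseteq> blk n (Suc i) b"
          using au odd e1 n1 by (auto simp: hP P_def[symmetric] X1_def algebra_simps)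
        show "N \<subseteq> blk n (Suc i) (b + 1)"
          using au odd n1 by (auto simp: hP P_def[symmetric] N_def algebra_simps)
        show "(b + 1) * 2 ^ Suc i \<le> n" using n1 by (simp add: hP P_def[symmetric] algebra_simps)
        show "2 ^ Suc i \<le> m * card X1" using True by (simp add: hP P_def[symmetric])
      qed
      then show ?thesis by (simp add: hP P_def[symmetric])
    next
      case False
      then have "4*P \<le> m * card X2" using RW cX by (simp add: algebra_simps)
      have "m * card (T \<inter> N - R u) < 2^i"
      proof (rule expand_fwd[OF uT, of X2 _ "a+1"])
        show "X2 \<subseteq> R u" by (auto simp: X2_def)
        show "X2 \<subseteq> blk n i (a+1)"
          using au odd e1 n1 by (auto simp: P_def[symmetric] X2_def algebra_simps)
        show "N \<subseteq> blk n i (a + 1 + 1)"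
          using au odd n1 by (auto simp: P_def[symmetric] N_def algebra_simps)
        show "(a + 1 + 1) * 2 ^ i \<le> n" using n1 e1 by (simp add: P_def[symmetric])
        show "2 ^ i \<le> m * card X2" using \<open>4*P \<le> m * card X2\<close> by (simp add: P_def[symmetric])
      qed
      then show ?thesis by (simp add: P_def[symmetric])
    qed
    then have "m * card (T \<inter> (W \<union> N)) \<le> m * card (R u \<inter> (W \<union> N)) + 2*P + 2*P"
      using step_count[OF fW _ eq(2) RT IH, of "2*P"] by (simp add: N_def[symmetric] less_imp_le \<open>finite N\<close>)
    then show ?thesis unfolding ee using eq by (simp add: hP P_def[symmetric])
  qed
qed

end


context conn begin

lemma bwd:
  assumes bg: "bgood v"
  shows "1 \<le> v div 2^i \<Longrightarrow>
    m * card (T \<inter> {(v div 2^i - 1)*2^i..v}) \<le> m * card (Q v \<inter> {(v div 2^i - 1)*2^i..v}) + 2*2^i"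
proof (induction i)
  case 0
  have vT: "v \<in> T" using bg by (simp add: bgood_def)
  have vn: "v < n" using vT T by auto
  have v1: "1 \<le> v" using 0 by simp
  have "T \<inter> {v-1..v} \<subseteq> Q v \<inter> {v-1..v}"
  proof
    fix w assume w: "w \<in> T \<inter> {v-1..v}"
    show "w \<in> Q v \<inter> {v-1..v}"
    proof (cases "w = v")
      case True then show ?thesis using w v_Q by auto
    next
      case False
      then have wv: "w = v-1" using w by auto
      have "\<exists>x\<in>{v-1}. \<exists>y\<in>{v-1+1}. (x,y) \<in> E"
        using LE v1 vn K1 unfolding LE_def mK
        by (elim allE[of _ 0] allE[of _ "v-1"] allE[of _ "{v-1}"] allE[of _ "{v-1+1}"]) auto
      then have "(w,v) \<in> Er" using wv w vT v1 by (auto simp: Er_def)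
      then show ?thesis using w by (auto simp: Q_def)
    qed
  qed
  then have "card (T \<inter> {v-1..v}) \<le> card (Q v \<inter> {v-1..v})" by (intro card_mono) auto
  then have "m * card (T \<inter> {v-1..v}) \<le> m * card (Q v \<inter> {v-1..v})" by (rule mult_le_mono2)
  then have "m * card (T \<inter> {v-1..v}) \<le> m * card (Q v \<inter> {v-1..v}) + 2*2^0" by (rule trans_le_add1)
  moreover have "(v div 2^0 - 1)*2^0 = v-1" by simp
  ultimately show ?case by (simp only:)
next
  case (Suc i)
  define P where "P = (2::nat)^i"
  define a where "a = v div P"
  define b where "b = a div 2"
  have P0: "P > 0" by (simp add: P_def)
  have hP: "(2::nat)^Suc i = 2*P" by (simp add: P_def)
  have vb: "v div 2^Suc i = b" by (simp only: power_Suc2 div_mult2_eq b_def a_def P_def)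
  have av: "a*P \<le> v" "v < a*P + P" using div_facts[OF P0, of v] by (simp_all add: a_def)
  have ab: "a = 2*b \<or> a = 2*b+1" by (simp add: b_def) arith
  have b1: "1 \<le> b" using Suc.prems by (simp only: vb)
  then obtain c where c: "b = c+1" by (metis add.commute le_Suc_ex)
  have ee: "(v div 2^Suc i - 1) * 2^Suc i = c*(2*P)" by (subst vb) (simp only: hP c diff_add_inverse2)
  have vT: "v \<in> T" using bg by (simp add: bgood_def)
  have vn: "v < n" using vT T by auto
  have QT: "Q v \<subseteq> T" using Q_sub vT .
  have a1: "a - 1 = 2*c+1 \<or> (a - 1 = 2*c+2 \<and> a = 2*c+3)" using ab c by auto
  define W where "W = {(a-1)*P..v}"
  have IH: "m * card (T \<inter> W) \<le> m * card (Q v \<inter> W) + 2*P"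
  proof -
    have "1 \<le> v div 2^i" using ab c by (auto simp: a_def P_def)
    then show ?thesis using Suc.IH by (simp add: W_def a_def P_def)
  qed
  have TW: "8*P \<le> m * card (T \<inter> W)"
  proof -
    define r where "r = v + 1 - (a-1)*P"
    have am: "(a-1)*P + P = a*P" using a1 by (cases a) auto
    have r1: "P \<le> r" "v + 1 - r = (a-1)*P" "r \<le> v+1" using av am
      unfolding r_def by arith+
    have "1 \<le> r" using r1 P0 by simp
    then have "r \<le> K * card (T \<inter> {v+1-r..v})" using bg r1 unfolding bgood_def by blast
    then have "r \<le> K * card (T \<inter> W)" using r1 by (simp add: W_def)
    then show ?thesis using r1 by (simp add: mK)
  qed
  have QW: "6*P \<le> m * card (Q v \<inter> W)" using TW IH by simp
  have fW: "finite W" by (simp add: W_def)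
  show ?case unfolding ee
  proof (cases "a = 2*b")
    case True
    then have aa: "a = 2*c+2" using c by simp
    have Wd: "W = {(2*c+1)*P..v}" using aa by (simp add: W_def)
    define N where "N = {(2*c)*P..<(2*c+1)*P}"
    have "finite N" by (simp add: N_def)
    have eq: "{c*(2*P)..v} = W \<union> N" "W \<inter> N = {}"
      using av aa by (auto simp: Wd N_def algebra_simps)
    define X1 where "X1 = Q v \<inter> {a*P..v}"
    define X2 where "X2 = Q v \<inter> {(2*c+1)*P..<a*P}"
    have cX: "card (Q v \<inter> W) = card X1 + card X2"
    proof -
      have "Q v \<inter> W = X1 \<union> X2" "X1 \<inter> X2 = {}" using av aa by (auto simp: Wd X1_def X2_def algebra_simps)
      moreover have "finite X1" "finite X2" by (auto simp: X1_def X2_def)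
      ultimately show ?thesis by (simp add: card_Un_disjoint)
    qed
    have "m * card (T \<inter> N - Q v) < 2*P"
    proof (cases "2*P \<le> m * card X1")
      case True
      have "m * card (T \<inter> N - Q v) < 2^Suc i"
      proof (rule expand_bwd[OF vT, of X1 _ c])
        show "X1 \<subseteq> Q v" by (auto simp: X1_def)
        show "X1 \<subseteq> blk n (Suc i) (c+1)"
          using av aa vn by (auto simp: hP P_def[symmetric] X1_def algebra_simps)
        show "N \<subseteq> blk n (Suc i) c"
          using av aa vn by (auto simp: hP P_def[symmetric] N_def algebra_simps)
        show "(c + 1) * 2 ^ Suc i \<le> n" using av aa vn by (simp add: hP P_def[symmetric] algebra_simps)
        show "2 ^ Suc i \<le> m * card X1" using True by (simp add: hP P_def[symmetric])
      qed
      then show ?thesis by (simp add: hP P_def[symmetric])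
    next
      case False
      then have "4*P \<le> m * card X2" using QW cX by (simp add: algebra_simps)
      have "m * card (T \<inter> N - Q v) < 2^i"
      proof (rule expand_bwd[OF vT, of X2 _ "2*c"])
        show "X2 \<subseteq> Q v" by (auto simp: X2_def)
        show "X2 \<subseteq> blk n i (2*c+1)"
          using av aa vn by (auto simp: P_def[symmetric] X2_def algebra_simps)
        show "N \<subseteq> blk n i (2*c)"
          using av aa vn by (auto simp: P_def[symmetric] N_def algebra_simps)
        show "(2*c + 1) * 2 ^ i \<le> n" using av aa vn by (simp add: P_def[symmetric] algebra_simps)
        show "2 ^ i \<le> m * card X2" using \<open>4*P \<le> m * card X2\<close> by (simp add: P_def[symmetric])
      qed
      then show ?thesis by (simp add: P_def[symmetric])
    qed
    then have "m * card (T \<inter> (W \<union> N)) \<le> m * card (Q v \<inter> (W \<union> N)) + 2*P + 2*P"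
      using step_count[OF fW _ eq(2) QT IH, of "2*P"] by (simp add: N_def[symmetric] less_imp_le \<open>finite N\<close>)
    then show "m * card (T \<inter> {c*(2*P)..v}) \<le> m * card (Q v \<inter> {c*(2*P)..v}) + 2 * 2 ^ Suc i"
      using eq by (simp add: hP P_def[symmetric])
  next
    case False
    then have aa: "a = 2*c+3" using c ab by simp
    have Wd: "W = {(2*c+2)*P..v}" using aa by (simp add: W_def)
    define N where "N = {(2*c)*P..<(2*c+2)*P}"
    have "finite N" by (simp add: N_def)
    have eq: "{c*(2*P)..v} = W \<union> N" "W \<inter> N = {}"
      using av aa by (auto simp: Wd N_def algebra_simps)
    have "m * card (T \<inter> N - Q v) < 2^Suc i"
    proof (rule expand_bwd[OF vT, of "Q v \<inter> W" _ c])
      show "Q v \<inter> W \<subseteq> blk n (Suc i) (c+1)"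
        using av aa vn by (auto simp: hP P_def[symmetric] Wd algebra_simps)
      show "N \<subseteq> blk n (Suc i) c"
        using av aa vn by (auto simp: hP P_def[symmetric] N_def algebra_simps)
      show "(c + 1) * 2 ^ Suc i \<le> n" using av aa vn by (simp add: hP P_def[symmetric] algebra_simps)
      show "2 ^ Suc i \<le> m * card (Q v \<inter> W)" using QW by (simp add: hP P_def[symmetric])
    qed auto
    then have "m * card (T \<inter> (W \<union> N)) \<le> m * card (Q v \<inter> (W \<union> N)) + 2*P + 2*P"
      using step_count[OF fW _ eq(2) QT IH, of "2*P"] by (simp add: N_def[symmetric] less_imp_le \<open>finite N\<close> hP P_def[symmetric])
    then show "m * card (T \<inter> {c*(2*P)..v}) \<le> m * card (Q v \<inter> {c*(2*P)..v}) + 2 * 2 ^ Suc i"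
      using eq by (simp add: hP P_def[symmetric])
  qed
qed

end


lemma exists_switch: "P (0::nat) \<Longrightarrow> \<not> P k \<Longrightarrow> \<exists>i. P i \<and> \<not> P (Suc i)"
  by (induction k) auto

context conn begin

lemma link:
  assumes "x \<in> R u" "y \<in> Q v" "(x,y) \<in> E" "u \<in> T" "v \<in> T"
  shows "(u,v) \<in> Er\<^sup>*"
proof -
  have "x \<in> T" "y \<in> T" using assms R_sub Q_sub by auto
  then have "(x,y) \<in> Er" using assms by (simp add: Er_def)
  moreover have "(u,x) \<in> Er\<^sup>*" "(y,v) \<in> Er\<^sup>*" using assms by (auto simp: R_def Q_def)
  ultimately show ?thesis by (meson rtrancl_into_rtrancl rtrancl_trans)
qed

lemma meet:
  assumes "finite Z" "u \<in> T" "v \<in> T" "m * card (T \<inter> Z) < m * card (R u \<inter> Z) + m * card (Q v \<inter> Z)"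
  shows "(u,v) \<in> Er\<^sup>*"
proof (rule ccontr)
  assume nc: "(u,v) \<notin> Er\<^sup>*"
  have "(R u \<inter> Z) \<inter> (Q v \<inter> Z) = {}"
  proof (rule ccontr)
    assume "(R u \<inter> Z) \<inter> (Q v \<inter> Z) \<noteq> {}"
    then obtain w where "(u,w) \<in> Er\<^sup>*" "(w,v) \<in> Er\<^sup>*" by (auto simp: R_def Q_def)
    then show False using nc by (meson rtrancl_trans)
  qed
  then have "card (R u \<inter> Z) + card (Q v \<inter> Z) = card ((R u \<inter> Z) \<union> (Q v \<inter> Z))"
    using assms(1) by (simp add: card_Un_disjoint)
  also have "\<dots> \<le> card (T \<inter> Z)" using assms R_sub Q_sub by (intro card_mono) auto
  finally have "m * (card (R u \<inter> Z) + card (Q v \<inter> Z)) \<le> m * card (T \<inter> Z)" by simp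
  then show False using assms(4) by (simp add: algebra_simps)
qed

lemma connect:
  assumes fg: "fgood u" and bg: "bgood v" and uv: "u < v"
  shows "(u,v) \<in> Er\<^sup>*"
proof -
  have uT: "u \<in> T" using fg by (simp add: fgood_def)
  have vT: "v \<in> T" using bg by (simp add: bgood_def)
  have vn: "v < n" using vT T by auto
  define e where "e i = (u div 2^i + 2)*(2::nat)^i" for i
  have "e 0 \<le> v+1" using uv by (simp add: e_def)
  moreover have "\<not> e (v+1) \<le> v+1"
  proof -
    have "v + 1 < 2^(v+1)" by (rule less_exp)
    also have "\<dots> \<le> e (v+1)" by (simp add: e_def)
    finally show ?thesis by simp
  qed
  ultimately obtain i where ei: "e i \<le> v+1" "\<not> e (Suc i) \<le> v+1"
    using exists_switch[of "\<lambda>i. e i \<le> v+1"] by blast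
  define P where "P = (2::nat)^i"
  define a where "a = u div P"
  define c where "c = v div P"
  define h where "h = a div 2"
  have P0: "P > 0" by (simp add: P_def)
  have au: "a*P \<le> u" "u < a*P + P" using div_facts[OF P0, of u] by (simp_all add: a_def)
  have av: "c*P \<le> v" "v < c*P + P" using div_facts[OF P0, of v] by (simp_all add: c_def)
  have ah: "a = 2*h \<or> a = 2*h+1" by (simp add: h_def) arith
  have uh: "u div 2^Suc i = h" by (simp only: power_Suc2 div_mult2_eq h_def a_def P_def)
  have e1: "(a+2)*P \<le> v+1" using ei(1) by (simp add: e_def a_def P_def)
  have e2: "v+1 < (h+2)*(2*P)" using ei(2) unfolding e_def uh by (simp add: P_def)
  have ca1: "a+1 < c+1"
  proof -
    have x: "(a+2)*P = a*P + P + P" "(a+1)*P = a*P + P" "(c+1)*P = c*P + P" by (simp_all add: algebra_simps)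
    have "(a+1)*P < (c+1)*P" using e1 av P0 x by linarith
    then show ?thesis by (simp only: mult_less_cancel2)
  qed
  have ca2: "c < a+4"
  proof -
    have x: "(h+2)*(2*P) = (2*h)*P + 4*P" "(a+4)*P = a*P + 4*P" "(2*h+1)*P = (2*h)*P + P"
      by (simp_all add: algebra_simps)
    have "c*P < (a+4)*P" using e2 av ah x by auto
    then show ?thesis by (simp only: mult_less_cancel2)
  qed
  have c1: "1 \<le> c" using ca1 by simp
  define F where "F = {u..<(a+2)*P}"
  define B where "B = {(c-1)*P..v}"
  have fF: "finite F" "finite B" by (simp_all add: F_def B_def)
  have FW: "m * card (T \<inter> F) \<le> m * card (R u \<inter> F) + 2*P"
    using fwd[OF fg, of i] e1 vn by (simp add: F_def a_def P_def)
  have BW: "m * card (T \<inter> B) \<le> m * card (Q v \<inter> B) + 2*P"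
    using bwd[OF bg, of i] c1 by (simp add: B_def c_def P_def)
  have TF: "8*P \<le> m * card (T \<inter> F)"
  proof -
    define r where "r = (a+2)*P - u"
    have r1: "P \<le> r" "u + r = (a+2)*P" using au by (simp_all add: r_def algebra_simps)
    have "1 \<le> r" using r1 P0 by simp
    moreover have "u + r \<le> n" using r1 e1 vn by simp
    ultimately have "r \<le> K * card (T \<inter> {u..<u+r})" using fg unfolding fgood_def by blast
    then have "r \<le> K * card (T \<inter> F)" using r1 by (simp add: F_def)
    then show ?thesis using r1 by (simp add: mK)
  qed
  have TB: "8*P \<le> m * card (T \<inter> B)"
  proof -
    define r where "r = v + 1 - (c-1)*P"
    have am: "(c-1)*P + P = c*P" using c1 by (cases c) auto
    have r1: "P \<le> r" "v + 1 - r = (c-1)*P" "r \<le> v+1" using av am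
      unfolding r_def by arith+
    have "1 \<le> r" using r1 P0 by simp
    then have "r \<le> K * card (T \<inter> {v+1-r..v})" using bg r1 unfolding bgood_def by blast
    then have "r \<le> K * card (T \<inter> B)" using r1 by (simp add: B_def)
    then show ?thesis using r1 by (simp add: mK)
  qed
  have RT: "R u \<subseteq> T" and QT: "Q v \<subseteq> T" using R_sub[OF uT] Q_sub[OF vT] by auto
  consider "c = a+1" | "c = a+2" | "c = a+3" using ca1 ca2 by linarith
  then show ?thesis
  proof cases
    case 1
    have vv: "v + 1 = (a+2)*P" using e1 av 1 by (simp add: algebra_simps)
    have FB: "F \<subseteq> B" using 1 au vv by (auto simp: F_def B_def)
    have "card (T \<inter> F) + card (Q v \<inter> B) \<le> card (Q v \<inter> F) + card (T \<inter> B)"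
      by (rule sub_count[OF fF(2) FB QT])
    then have "m * card (T \<inter> F) + m * card (Q v \<inter> B) \<le> m * card (Q v \<inter> F) + m * card (T \<inter> B)"
      by (metis add_mult_distrib2 mult_le_mono2)
    then have "m * card (T \<inter> F) < m * card (R u \<inter> F) + m * card (Q v \<inter> F)"
      using FW BW TF P0 by linarith
    then show ?thesis by (rule meet[OF fF(1) uT vT])
  next
    case 2
    define Z where "Z = {(a+1)*P..<(a+2)*P}"
    have fZ: "finite Z" by (simp add: Z_def)
    have ZF: "Z \<subseteq> F" using au by (auto simp: Z_def F_def algebra_simps)
    have ZB: "Z \<subseteq> B" using 2 e1 by (auto simp: Z_def B_def algebra_simps)
    have s1: "card (T \<inter> Z) + card (R u \<inter> F) \<le> card (R u \<inter> Z) + card (T \<inter> F)"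
      by (rule sub_count[OF fF(1) ZF RT])
    have s2: "card (T \<inter> Z) + card (Q v \<inter> B) \<le> card (Q v \<inter> Z) + card (T \<inter> B)"
      by (rule sub_count[OF fF(2) ZB QT])
    have m1: "m * card (T \<inter> Z) + m * card (R u \<inter> F) \<le> m * card (R u \<inter> Z) + m * card (T \<inter> F)"
      using s1 by (metis add_mult_distrib2 mult_le_mono2)
    have m2: "m * card (T \<inter> Z) + m * card (Q v \<inter> B) \<le> m * card (Q v \<inter> Z) + m * card (T \<inter> B)"
      using s2 by (metis add_mult_distrib2 mult_le_mono2)
    show ?thesis
    proof (cases "4*P < m * card (T \<inter> Z)")
      case True
      then have "m * card (T \<inter> Z) < m * card (R u \<inter> Z) + m * card (Q v \<inter> Z)"
        using m1 m2 FW BW P0 by linarith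
      then show ?thesis by (rule meet[OF fZ uT vT])
    next
      case False
      define X where "X = R u \<inter> {u..<(a+1)*P}"
      define Y where "Y = Q v \<inter> {(a+2)*P..v}"
      have cX: "card (R u \<inter> F) = card X + card (R u \<inter> Z)"
      proof -
        have "R u \<inter> F = X \<union> (R u \<inter> Z)" "X \<inter> (R u \<inter> Z) = {}"
          using au by (auto simp: F_def X_def Z_def algebra_simps)
        then show ?thesis using fZ by (simp add: card_Un_disjoint X_def)
      qed
      have cY: "card (Q v \<inter> B) = card Y + card (Q v \<inter> Z)"
      proof -
        have "Q v \<inter> B = Y \<union> (Q v \<inter> Z)" "Y \<inter> (Q v \<inter> Z) = {}"
          using 2 e1 by (auto simp: B_def Y_def Z_def algebra_simps)
        then show ?thesis using fZ by (simp add: card_Un_disjoint Y_def)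
      qed
      have RZ: "card (R u \<inter> Z) \<le> card (T \<inter> Z)" "card (Q v \<inter> Z) \<le> card (T \<inter> Z)"
        using RT QT fZ by (auto intro: card_mono)
      have z1: "m * card (R u \<inter> Z) \<le> m * card (T \<inter> Z)" using RZ(1) by (rule mult_le_mono2)
      have z2: "m * card (Q v \<inter> Z) \<le> m * card (T \<inter> Z)" using RZ(2) by (rule mult_le_mono2)
      have z3: "m * card (R u \<inter> F) = m * card X + m * card (R u \<inter> Z)" using cX by (simp add: algebra_simps)
      have z4: "m * card (Q v \<inter> B) = m * card Y + m * card (Q v \<inter> Z)" using cY by (simp add: algebra_simps)
      have mX: "2*P \<le> m * card X" using z1 z3 FW TF False by linarith
      have mY: "2*P \<le> m * card Y" using z2 z4 BW TB False by linarith
      have "\<exists>x\<in>X. \<exists>y\<in>Y. (x,y) \<in> E"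
      proof -
        have hyp: "(h+1)*2^Suc i \<le> n" "X \<subseteq> blk n (Suc i) h" "Y \<subseteq> blk n (Suc i) (h+1)"
          "2^Suc i \<le> m * card X" "2^Suc i \<le> m * card Y"
        proof -
          show "(h+1)*2^Suc i \<le> n" using ah e1 vn by (auto simp: P_def[symmetric] algebra_simps)
          show "X \<subseteq> blk n (Suc i) h" using ah au e1 vn
            by (auto simp: X_def P_def[symmetric] algebra_simps)
          show "Y \<subseteq> blk n (Suc i) (h+1)" using ah av 2 vn
            by (auto simp: Y_def P_def[symmetric] algebra_simps)
          show "2^Suc i \<le> m * card X" "2^Suc i \<le> m * card Y" using mX mY by (simp_all add: P_def)
        qed
        then show ?thesis using LE unfolding LE_def by blast
      qed
      then obtain x y where "x \<in> X" "y \<in> Y" "(x,y) \<in> E" by blast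
      then show ?thesis using link[of x u y v] uT vT by (auto simp: X_def Y_def)
    qed
  next
    case 3
    have heven: "a = 2*h"
    proof (rule ccontr)
      assume "a \<noteq> 2*h"
      then have "a = 2*h+1" using ah by simp
      then show False using e2 av 3 by (simp add: algebra_simps)
    qed
    define X where "X = R u \<inter> F"
    define Y where "Y = Q v \<inter> B"
    have mX: "2*P \<le> m * card X" using FW TF by (simp add: X_def)
    have mY: "2*P \<le> m * card Y" using BW TB by (simp add: Y_def)
    have "\<exists>x\<in>X. \<exists>y\<in>Y. (x,y) \<in> E"
    proof -
      have hyp: "(h+1)*2^Suc i \<le> n" "X \<subseteq> blk n (Suc i) h" "Y \<subseteq> blk n (Suc i) (h+1)"
        "2^Suc i \<le> m * card X" "2^Suc i \<le> m * card Y"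
      proof -
        show "(h+1)*2^Suc i \<le> n" using heven e1 vn by (auto simp: P_def[symmetric] algebra_simps)
        show "X \<subseteq> blk n (Suc i) h" using heven au e1 vn
          by (auto simp: X_def F_def P_def[symmetric] algebra_simps)
        show "Y \<subseteq> blk n (Suc i) (h+1)" using heven av 3 vn
          by (auto simp: Y_def B_def P_def[symmetric] algebra_simps)
        show "2^Suc i \<le> m * card X" "2^Suc i \<le> m * card Y" using mX mY by (simp_all add: P_def)
      qed
      then show ?thesis using LE unfolding LE_def by blast
    qed
    then obtain x y where "x \<in> X" "y \<in> Y" "(x,y) \<in> E" by blast
    then show ?thesis using link[of x u y v] uT vT by (auto simp: X_def Y_def)
  qed
qed

end


context conn begin

definition Fb where "Fb = {x. x < n \<and> (\<exists>r. 1 \<le> r \<and> x + r \<le> n \<and> K * card (T \<inter> {x..<x+r}) < r)}"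
definition Bb where "Bb = {x. x < n \<and> (\<exists>r. 1 \<le> r \<and> r \<le> x+1 \<and> K * card (T \<inter> {x+1-r..x}) < r)}"

lemma interval_arith:
  fixes t r :: nat
  assumes "K * t < r" "t \<le> r"
  shows "(K-1) * r \<le> K * (r - t)"
proof -
  have a: "K * (r - t) + K * t = K * r" by (metis add_mult_distrib2 le_add_diff_inverse2 assms(2))
  have b: "(K - 1) * r + r = K * r" by (metis K1 add_mult_distrib mult_1 le_add_diff_inverse2)
  show ?thesis using a b assms(1) by linarith
qed

lemma Fb_count: "x \<le> n \<Longrightarrow> (K-1) * card (Fb \<inter> {x..<n}) \<le> K * card ({x..<n} - T)"
proof (induction "n - x" arbitrary: x rule: less_induct)
  case less
  show ?case
  proof (cases "x = n")
    case True then show ?thesis by simp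
  next
    case False
    then have xn: "x < n" using less.prems by simp
    show ?thesis
    proof (cases "x \<in> Fb")
      case False
      have "{x..<n} = insert x {Suc x..<n}" using xn by auto
      then have "Fb \<inter> {x..<n} = Fb \<inter> {Suc x..<n}" using False by auto
      moreover have "card ({Suc x..<n} - T) \<le> card ({x..<n} - T)" by (intro card_mono) auto
      moreover have "(K-1) * card (Fb \<inter> {Suc x..<n}) \<le> K * card ({Suc x..<n} - T)"
        using less.hyps[of "Suc x"] xn by simp
      ultimately show ?thesis by (metis le_trans mult_le_mono2)
    next
      case True
      then obtain r where r: "1 \<le> r" "x + r \<le> n" "K * card (T \<inter> {x..<x+r}) < r" by (auto simp: Fb_def)
      define I where "I = {x..<x+r}"
      have IH: "(K-1) * card (Fb \<inter> {x+r..<n}) \<le> K * card ({x+r..<n} - T)"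
        using less.hyps[of "x+r"] r xn by simp
      have "Fb \<inter> {x..<n} \<subseteq> I \<union> (Fb \<inter> {x+r..<n})" by (auto simp: I_def)
      then have "card (Fb \<inter> {x..<n}) \<le> card (I \<union> (Fb \<inter> {x+r..<n}))"
        by (intro card_mono) (auto simp: I_def)
      also have "\<dots> \<le> card I + card (Fb \<inter> {x+r..<n})" by (rule card_Un_le)
      finally have c1: "card (Fb \<inter> {x..<n}) \<le> r + card (Fb \<inter> {x+r..<n})" by (simp add: I_def)
      have "card (T \<inter> I) \<le> card I" by (intro card_mono) (auto simp: I_def)
      then have tI: "card (T \<inter> I) \<le> r" by (simp add: I_def)
      have c2: "card ({x..<n} - T) = (r - card (T \<inter> I)) + card ({x+r..<n} - T)"
      proof -
        have "{x..<n} - T = (I - T) \<union> ({x+r..<n} - T)" "(I - T) \<inter> ({x+r..<n} - T) = {}"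
          using r by (auto simp: I_def)
        moreover have "card (I - T) = r - card (T \<inter> I)"
        proof -
          have "card (I - T) = card I - card (I \<inter> T)" by (simp add: I_def card_Diff_subset_Int Diff_Int2 card_Diff_subset)
          then show ?thesis by (simp add: I_def Int_commute)
        qed
        ultimately show ?thesis by (simp add: card_Un_disjoint I_def)
      qed
      have "(K-1) * r \<le> K * (r - card (T \<inter> I))" using interval_arith r(3) tI by (simp add: I_def)
      then show ?thesis
      proof -
        assume k: "(K-1) * r \<le> K * (r - card (T \<inter> I))"
        have "(K-1) * card (Fb \<inter> {x..<n}) \<le> (K-1) * (r + card (Fb \<inter> {x+r..<n}))"
          using c1 by (rule mult_le_mono2)
        also have "\<dots> = (K-1) * r + (K-1) * card (Fb \<inter> {x+r..<n})" by (simp add: add_mult_distrib2)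
        also have "\<dots> \<le> K * (r - card (T \<inter> I)) + K * card ({x+r..<n} - T)" using k IH by (rule add_le_mono)
        also have "\<dots> = K * card ({x..<n} - T)" using c2 by (simp add: add_mult_distrib2)
        finally show ?thesis .
      qed
    qed
  qed
qed

lemma Bb_count: "x \<le> n \<Longrightarrow> (K-1) * card (Bb \<inter> {..<x}) \<le> K * card ({..<x} - T)"
proof (induction x rule: less_induct)
  case (less x)
  show ?case
  proof (cases x)
    case 0 then show ?thesis by simp
  next
    case (Suc y)
    then have yn: "y < n" using less.prems by simp
    show ?thesis
    proof (cases "y \<in> Bb")
      case False
      have "{..<x} = insert y {..<y}" using Suc by (simp add: lessThan_Suc)
      then have "Bb \<inter> {..<x} = Bb \<inter> {..<y}" using False by auto
      moreover have "card ({..<y} - T) \<le> card ({..<x} - T)" using Suc by (intro card_mono) auto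
      moreover have "(K-1) * card (Bb \<inter> {..<y}) \<le> K * card ({..<y} - T)"
        using less.IH[of y] Suc less.prems by simp
      ultimately show ?thesis by (metis le_trans mult_le_mono2)
    next
      case True
      then obtain r where r: "1 \<le> r" "r \<le> y+1" "K * card (T \<inter> {y+1-r..y}) < r" by (auto simp: Bb_def)
      define I where "I = {x-r..<x}"
      have Ieq: "{y+1-r..y} = I" using Suc r by (auto simp: I_def)
      have cI: "card I = r" using Suc r by (simp add: I_def)
      have IH: "(K-1) * card (Bb \<inter> {..<x-r}) \<le> K * card ({..<x-r} - T)"
        using less.IH[of "x-r"] r Suc less.prems by simp
      have "Bb \<inter> {..<x} \<subseteq> I \<union> (Bb \<inter> {..<x-r})" by (auto simp: I_def)
      then have "card (Bb \<inter> {..<x}) \<le> card (I \<union> (Bb \<inter> {..<x-r}))"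
        by (intro card_mono) (auto simp: I_def)
      also have "\<dots> \<le> card I + card (Bb \<inter> {..<x-r})" by (rule card_Un_le)
      finally have c1: "card (Bb \<inter> {..<x}) \<le> r + card (Bb \<inter> {..<x-r})" by (simp add: cI)
      have "card (T \<inter> I) \<le> card I" by (intro card_mono) (auto simp: I_def)
      then have tI: "card (T \<inter> I) \<le> r" by (simp add: cI)
      have c2: "card ({..<x} - T) = (r - card (T \<inter> I)) + card ({..<x-r} - T)"
      proof -
        have "{..<x} - T = (I - T) \<union> ({..<x-r} - T)" "(I - T) \<inter> ({..<x-r} - T) = {}"
          using r Suc by (auto simp: I_def)
        moreover have "card (I - T) = r - card (T \<inter> I)"
        proof -
          have "card (I - T) = card I - card (I \<inter> T)" by (simp add: I_def card_Diff_subset_Int Diff_Int2 card_Diff_subset)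
          then show ?thesis using cI by (simp add: Int_commute)
        qed
        ultimately show ?thesis by (simp add: card_Un_disjoint I_def)
      qed
      have "(K-1) * r \<le> K * (r - card (T \<inter> I))" using interval_arith r(3) tI Ieq by simp
      then show ?thesis
      proof -
        assume k: "(K-1) * r \<le> K * (r - card (T \<inter> I))"
        have "(K-1) * card (Bb \<inter> {..<x}) \<le> (K-1) * (r + card (Bb \<inter> {..<x-r}))"
          using c1 by (rule mult_le_mono2)
        also have "\<dots> = (K-1) * r + (K-1) * card (Bb \<inter> {..<x-r})" by (simp add: add_mult_distrib2)
        also have "\<dots> \<le> K * (r - card (T \<inter> I)) + K * card ({..<x-r} - T)" using k IH by (rule add_le_mono)
        also have "\<dots> = K * card ({..<x} - T)" using c2 by (simp add: add_mult_distrib2)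
        finally show ?thesis .
      qed
    qed
  qed
qed

lemma depth_bound:
  assumes fwdE: "\<forall>(a,b)\<in>E. a < b" and K2: "K \<ge> 2"
  shows "(K-1) * card T \<le> (K-1) * depth T E + 2*n"
proof -
  define G where "G = {u \<in> T. fgood u \<and> bgood u}"
  define S where "S = {..<n} - T"
  have fT: "finite T" using T finite_subset by blast
  have TG: "T - G \<subseteq> (Fb \<inter> T) \<union> (Bb \<inter> T)"
  proof
    fix u assume u: "u \<in> T - G"
    then have un: "u < n" using T by auto
    show "u \<in> (Fb \<inter> T) \<union> (Bb \<inter> T)"
    proof (cases "fgood u")
      case False
      then have "u \<in> Fb" using u un unfolding fgood_def Fb_def by auto
      then show ?thesis using u by auto
    next
      case True
      then have "\<not> bgood u" using u by (auto simp: G_def)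
      then have "u \<in> Bb" using u un unfolding bgood_def Bb_def by auto
      then show ?thesis using u by auto
    qed
  qed
  have SF: "S \<subseteq> Fb"
  proof
    fix x assume x: "x \<in> S"
    then have "T \<inter> {x..<x+1} = {}" by (auto simp: S_def)
    then show "x \<in> Fb" using x unfolding Fb_def S_def by (intro CollectI conjI exI[of _ 1]) auto
  qed
  have SB: "S \<subseteq> Bb"
  proof
    fix x assume x: "x \<in> S"
    then have "T \<inter> {x+1-1..x} = {}" by (auto simp: S_def)
    then show "x \<in> Bb" using x unfolding Bb_def S_def by (intro CollectI conjI exI[of _ 1]) auto
  qed
  have fS: "finite S" by (simp add: S_def)
  have "card S \<le> card {..<n}" by (intro card_mono) (auto simp: S_def)
  then have cS: "card S \<le> n" by simp
  have Fc: "(K-1) * card (Fb \<inter> T) \<le> card S"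
  proof -
    have "Fb \<inter> {0..<n} = Fb" by (auto simp: Fb_def)
    moreover have "{0..<n} - T = S" by (auto simp: S_def)
    ultimately have h: "(K-1) * card Fb \<le> K * card S" using Fb_count[of 0] by simp
    have fFb: "finite Fb" by (rule finite_subset[of _ "{..<n}"]) (auto simp: Fb_def)
    have "Fb = (Fb \<inter> T) \<union> S" "(Fb \<inter> T) \<inter> S = {}" using SF by (auto simp: S_def Fb_def)
    then have "card Fb = card (Fb \<inter> T) + card S" using fFb fS by (metis card_Un_disjoint finite_Int)
    then have "(K-1) * card (Fb \<inter> T) + (K-1) * card S \<le> (K-1) * card S + card S"
      using h K2 by (simp add: add_mult_distrib2 diff_mult_distrib)
    then show ?thesis by simp
  qed
  have Bc: "(K-1) * card (Bb \<inter> T) \<le> card S"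
  proof -
    have "Bb \<inter> {..<n} = Bb" by (auto simp: Bb_def)
    moreover have "{..<n} - T = S" by (auto simp: S_def)
    ultimately have h: "(K-1) * card Bb \<le> K * card S" using Bb_count[of n] by simp
    have fBb: "finite Bb" by (rule finite_subset[of _ "{..<n}"]) (auto simp: Bb_def)
    have "Bb = (Bb \<inter> T) \<union> S" "(Bb \<inter> T) \<inter> S = {}" using SB by (auto simp: S_def Bb_def)
    then have "card Bb = card (Bb \<inter> T) + card S" using fBb fS by (metis card_Un_disjoint finite_Int)
    then have "(K-1) * card (Bb \<inter> T) + (K-1) * card S \<le> (K-1) * card S + card S"
      using h K2 by (simp add: add_mult_distrib2 diff_mult_distrib)
    then show ?thesis by simp
  qed
  have "card (T - G) \<le> card (Fb \<inter> T) + card (Bb \<inter> T)"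
  proof -
    have "card (T - G) \<le> card ((Fb \<inter> T) \<union> (Bb \<inter> T))" using TG fT by (intro card_mono) auto
    also have "\<dots> \<le> card (Fb \<inter> T) + card (Bb \<inter> T)" by (rule card_Un_le)
    finally show ?thesis .
  qed
  then have "(K-1) * card (T - G) \<le> (K-1) * card (Fb \<inter> T) + (K-1) * card (Bb \<inter> T)"
    by (metis add_mult_distrib2 mult_le_mono2)
  then have bad: "(K-1) * card (T - G) \<le> 2*n" using Fc Bc cS by linarith
  have GT: "G \<subseteq> T" by (auto simp: G_def)
  have good: "card G \<le> depth T E"
  proof (cases "G = {}")
    case True then show ?thesis by simp
  next
    case False
    have fG: "finite G" using GT fT finite_subset by blast
    have "\<forall>u\<in>G. \<forall>v\<in>G. u < v \<longrightarrow> (u,v) \<in> (E \<inter> (T \<times> T))\<^sup>*"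
      using connect by (auto simp: G_def Er_def)
    then obtain p where p: "is_path T E p" "G \<subseteq> set p"
      using chain_path[OF fG GT] False by blast
    have "card G \<le> card (set p)" using p by (intro card_mono) auto
    also have "\<dots> \<le> length p" by (rule card_length)
    also have "length p \<le> depth T E" unfolding depth_def
    proof (rule cSup_upper)
      show "length p \<in> {length p |p. is_path T E p}" using p by auto
      show "bdd_above {length p |p. is_path T E p}"
        using path_length_le[OF fwdE _ fT] by (intro bdd_aboveI[of _ "card T"]) auto
    qed
    finally show ?thesis .
  qed
  have "card T = card G + card (T - G)" using GT fT by (metis card_Diff_subset card_mono le_add_diff_inverse finite_subset)
  then have "(K-1) * card T = (K-1) * card G + (K-1) * card (T - G)" by (simp add: add_mult_distrib2)
  also have "\<dots> \<le> (K-1) * depth T E + 2*n" using good bad by (simp add: add_le_mono)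
  finally show ?thesis .
qed

end


lemma levels_bound:
  assumes "n \<ge> (2::nat)"
  shows "real (card {i::nat. 2^i \<le> n}) \<le> 3 * ln (real n)"
proof -
  have l2: "2/3 \<le> ln (2::real)" by (rule ln2_ge_two_thirds)
  have lnpos: "ln 2 \<le> ln (real n)" using assms by simp
  define L where "L = nat \<lfloor>ln (real n) / ln 2\<rfloor>"
  have sub: "{i::nat. 2^i \<le> n} \<subseteq> {..L}"
  proof
    fix i assume "i \<in> {i::nat. 2^i \<le> n}"
    then have "real (2^i) \<le> real n" by simp
    then have "ln (real (2^i)) \<le> ln (real n)" by (subst ln_le_cancel_iff) (use assms in auto)
    then have "real i * ln 2 \<le> ln (real n)" by (simp add: ln_realpow)
    then have "real i \<le> ln (real n) / ln 2" using l2 by (simp add: field_simps)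
    then have "i \<le> L" unfolding L_def by linarith
    then show "i \<in> {..L}" by simp
  qed
  have "card {i::nat. 2^i \<le> n} \<le> card {..L}" using sub by (intro card_mono) auto
  then have "real (card {i::nat. 2^i \<le> n}) \<le> real L + 1" by simp
  also have "real L \<le> ln (real n) / ln 2"
  proof -
    have "0 \<le> ln (real n) / ln 2" using l2 lnpos by simp
    then show ?thesis unfolding L_def by linarith
  qed
  then have "real L + 1 \<le> ln (real n) / ln 2 + 1" by simp
  also have "ln (real n) / ln 2 \<le> 3/2 * ln (real n)"
    using l2 lnpos by (simp add: divide_le_eq mult.commute)
  finally show ?thesis using l2 lnpos by linarith
qed

definition Hsel :: "nat \<Rightarrow> nat \<Rightarrow> nat \<Rightarrow> nat \<Rightarrow> (nat \<times> nat) set" where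
  "Hsel n m i j = (SOME H. H \<subseteq> blk n i j \<times> blk n i (j+1) \<and> (\<forall>y. card {x. (x,y) \<in> H} \<le> 3*m^2) \<and>
     (\<forall>X Y. X \<subseteq> blk n i j \<longrightarrow> Y \<subseteq> blk n i (j+1) \<longrightarrow> 2^i \<le> m*card X \<longrightarrow> 2^i \<le> m*card Y \<longrightarrow>
        (\<exists>x\<in>X. \<exists>y\<in>Y. (x,y) \<in> H)))"

definition Gr :: "nat \<Rightarrow> nat \<Rightarrow> (nat \<times> nat) set" where
  "Gr m n = (\<Union>i\<in>{i. 2^i \<le> n}. \<Union>j\<in>{j. (j+1)*2^i \<le> n}. Hsel n m i j)"

lemma Hsel_spec:
  assumes "(j+1)*2^i \<le> n" "m \<ge> 2"
  shows "Hsel n m i j \<subseteq> blk n i j \<times> blk n i (j+1) \<and> (\<forall>y. card {x. (x,y) \<in> Hsel n m i j} \<le> 3*m^2) \<and>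
     (\<forall>X Y. X \<subseteq> blk n i j \<longrightarrow> Y \<subseteq> blk n i (j+1) \<longrightarrow> 2^i \<le> m*card X \<longrightarrow> 2^i \<le> m*card Y \<longrightarrow>
        (\<exists>x\<in>X. \<exists>y\<in>Y. (x,y) \<in> Hsel n m i j))"
proof -
  have A: "blk n i j = {j*2^i..<(j+1)*2^i}" using assms by (auto simp: blk_def)
  have cA: "card (blk n i j) = 2^i" by (simp add: A algebra_simps)
  have Bs: "blk n i (j+1) \<subseteq> {(j+1)*2^i..<(j+2)*2^i}" by auto
  have cB: "card (blk n i (j+1)) \<le> 2^i"
  proof -
    have "card (blk n i (j+1)) \<le> card {(j+1)*2^i..<(j+2)*2^i}" using Bs by (intro card_mono) auto
    then show ?thesis by (simp add: algebra_simps)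
  qed
  have "\<exists>H. H \<subseteq> blk n i j \<times> blk n i (j+1) \<and> (\<forall>y. card {x. (x,y) \<in> H} \<le> 3*m^2) \<and>
     (\<forall>X Y. X \<subseteq> blk n i j \<longrightarrow> Y \<subseteq> blk n i (j+1) \<longrightarrow> 2^i \<le> m*card X \<longrightarrow> 2^i \<le> m*card Y \<longrightarrow>
        (\<exists>x\<in>X. \<exists>y\<in>Y. (x,y) \<in> H))"
    using expander_exists[of "blk n i j" "2^i" "blk n i (j+1)" m] cA cB assms(2)
    by (auto simp: blk_def)
  then show ?thesis unfolding Hsel_def by (rule someI_ex)
qed

lemma Gr_edge:
  assumes "(x,y) \<in> Gr m n" "m \<ge> 2"
  shows "x < y \<and> y < n \<and> (\<exists>i. 2^i \<le> n \<and> (y div 2^i - 1 + 1)*2^i \<le> n \<and> (y div 2^i) \<ge> 1 \<and> (x,y) \<in> Hsel n m i (y div 2^i - 1))"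
proof -
  obtain i j where ij: "2^i \<le> n" "(j+1)*2^i \<le> n" "(x,y) \<in> Hsel n m i j"
    using assms by (auto simp: Gr_def)
  then have "x \<in> blk n i j" "y \<in> blk n i (j+1)" using Hsel_spec[OF ij(2) assms(2)] by auto
  then have xy: "j*2^i \<le> x" "x < (j+1)*2^i" "(j+1)*2^i \<le> y" "y < (j+2)*2^i" "y < n" by auto
  have yd: "y div 2^i = j+1"
  proof -
    have "2^i * (j+1) \<le> y" "y < 2^i * Suc (j+1)" using xy by (simp_all add: algebra_simps)
    then show ?thesis by (rule div_nat_eqI)
  qed
  show ?thesis
  proof (intro conjI exI[of _ i])
    show "x < y" "y < n" "2^i \<le> n" using xy ij by simp_all
    show "(y div 2^i - 1 + 1)*2^i \<le> n" "1 \<le> y div 2^i" using yd ij by simp_all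
    show "(x,y) \<in> Hsel n m i (y div 2^i - 1)" using yd ij by simp
  qed
qed

lemma Gr_LE: "m \<ge> 2 \<Longrightarrow> LE n m (Gr m n)"
  unfolding LE_def
proof (intro allI impI)
  fix i j X Y
  assume h: "m \<ge> 2" "(j+1)*2^i \<le> n" "X \<subseteq> blk n i j" "Y \<subseteq> blk n i (j+1)" "2^i \<le> m * card X" "2^i \<le> m * card Y"
  then obtain x y where "x\<in>X" "y\<in>Y" "(x,y) \<in> Hsel n m i j" using Hsel_spec[OF h(2) h(1)] by blast
  moreover have "(2::nat)^i \<le> (j+1)*2^i" by simp
  then have "2^i \<le> n" using h(2) by (rule le_trans)
  ultimately show "\<exists>x\<in>X. \<exists>y\<in>Y. (x,y) \<in> Gr m n" using h(2) unfolding Gr_def by blast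
qed

lemma Gr_dag: "m \<ge> 2 \<Longrightarrow> is_dag {0..<n} (Gr m n)"
proof -
  assume m: "m \<ge> 2"
  have lt0: "a < b \<and> b < n" if "(a,b) \<in> Gr m n" for a b using Gr_edge[OF that m] by simp
  then have lt: "\<forall>(a,b)\<in>Gr m n. a < b \<and> b < n" by auto
  have "(a,b) \<in> (Gr m n)\<^sup>+ \<Longrightarrow> a < b" for a b
    by (induction rule: trancl_induct) (use lt in auto)
  then have "acyclic (Gr m n)" by (auto intro: acyclicI)
  moreover have "Gr m n \<subseteq> {0..<n} \<times> {0..<n}" using lt by auto
  ultimately show ?thesis by (simp add: is_dag_def)
qed

lemma Gr_indeg:
  assumes "m \<ge> 2" "n \<ge> 2"
  shows "real (indegree (Gr m n) v) \<le> 3 * real (3*m^2) * ln (real n)"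
proof -
  define L where "L = {i::nat. 2^i \<le> n}"
  have iL: "i \<le> n" if "2^i \<le> n" for i :: nat using less_exp[of i] that by linarith
  have fL: "finite L" by (rule finite_subset[of _ "{..n}"]) (auto simp: L_def iL)
  define L' where "L' = {i \<in> L. (v div 2^i - 1 + 1)*2^i \<le> n}"
  have fL': "finite L'" using fL by (simp add: L'_def)
  have "{u. (u,v) \<in> Gr m n} \<subseteq> (\<Union>i\<in>L'. {u. (u,v) \<in> Hsel n m i (v div 2^i - 1)})"
  proof
    fix u assume "u \<in> {u. (u,v) \<in> Gr m n}"
    then obtain i where "2^i \<le> n" "(v div 2^i - 1 + 1)*2^i \<le> n" "(u,v) \<in> Hsel n m i (v div 2^i - 1)"
      using Gr_edge[of u v m n] assms(1) by blast
    then show "u \<in> (\<Union>i\<in>L'. {u. (u,v) \<in> Hsel n m i (v div 2^i - 1)})"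
      unfolding L'_def L_def by blast
  qed
  moreover have fin: "finite {u. (u,v) \<in> Hsel n m i (v div 2^i - 1)}" if "i \<in> L'" for i
  proof -
    have "{u. (u,v) \<in> Hsel n m i (v div 2^i - 1)} \<subseteq> blk n i (v div 2^i - 1)"
      using Hsel_spec[of "v div 2^i - 1" i n m] that assms(1) by (auto simp: L'_def)
    then show ?thesis by (rule finite_subset) (simp add: blk_def)
  qed
  ultimately have "card {u. (u,v) \<in> Gr m n} \<le> card (\<Union>i\<in>L'. {u. (u,v) \<in> Hsel n m i (v div 2^i - 1)})"
    by (intro card_mono) (auto intro!: finite_UN_I fL')
  also have "\<dots> \<le> (\<Sum>i\<in>L'. card {u. (u,v) \<in> Hsel n m i (v div 2^i - 1)})"
    by (rule card_UN_le[OF fL'])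
  also have "\<dots> \<le> (\<Sum>i\<in>L'. 3*m^2)"
    using Hsel_spec assms(1) by (intro sum_mono) (auto simp: L'_def)
  also have "\<dots> = card L' * (3*m^2)" by simp
  also have "\<dots> \<le> card L * (3*m^2)" using fL by (intro mult_le_mono1 card_mono) (auto simp: L'_def)
  finally have "real (indegree (Gr m n) v) \<le> real (card L) * real (3*m^2)"
    unfolding indegree_def by (metis of_nat_le_iff of_nat_mult)
  also have "\<dots> \<le> 3 * ln (real n) * real (3*m^2)"
    using levels_bound[OF assms(2)] by (intro mult_right_mono) (auto simp: L_def)
  finally show ?thesis by (simp add: algebra_simps)
qed


lemma final_arith:
  fixes k e n c d :: real
  assumes "k*c \<le> k*d + 2*n" "k*(e*n+1) \<le> k*(c-d)" "2*n \<le> (k*e)*n" "1 \<le> k"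
  shows False
proof -
  have "k*(e*n+1) = (k*e)*n + k" "k*(c-d) = k*c - k*d" by (simp_all add: algebra_simps)
  then show False using assms by linarith
qed

theorem mainTheorem8:
  fixes \<epsilon> :: real
  assumes "\<epsilon> > 0"
  shows "\<exists>C :: real. \<exists>G :: nat \<Rightarrow> (nat \<times> nat) set.
           \<forall>n \<ge> 2.
             is_dag {0..<n} (G n) \<and>
             (\<forall>v \<in> {0..<n}. real (indegree (G n) v) \<le> C * ln (real n)) \<and>
             (\<forall>e d :: nat. real e + real d \<le> (1 - \<epsilon>) * real n \<longrightarrow> depth_robust {0..<n} (G n) e d)"
proof -
  define K where "K = nat \<lceil>2/\<epsilon>\<rceil> + 2"
  define m where "m = 8*K"
  have K2: "K \<ge> 2" by (simp add: K_def)
  have m2: "m \<ge> 2" using K2 by (simp add: m_def)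
  have Kr: "real (K-1) = real (nat \<lceil>2/\<epsilon>\<rceil>) + 1" by (simp add: K_def)
  have "2/\<epsilon> \<le> real (nat \<lceil>2/\<epsilon>\<rceil>)" by linarith
  then have "2/\<epsilon> \<le> real (K-1)" using Kr by linarith
  then have Ke: "2 \<le> real (K-1) * \<epsilon>" using pos_divide_le_eq[OF assms] by blast
  have k1: "1 \<le> real (K-1)" using Kr by simp
  have main: "depth_robust {0..<n} (Gr m n) e d"
    if ed: "real e + real d \<le> (1 - \<epsilon>) * real n" for n e d
    unfolding depth_robust_def
  proof (intro allI impI)
    fix S assume S: "S \<subseteq> {0..<n}" "card S \<le> e"
    define T where "T = {0..<n} - S"
    interpret conn n m K "Gr m n" T
      by unfold_locales (use Gr_LE[OF m2] K2 in \<open>auto simp: m_def T_def\<close>)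
    have fw0: "a < b" if "(a,b) \<in> Gr m n" for a b using Gr_edge[OF that m2] by simp
    then have fw: "\<forall>(a,b)\<in>Gr m n. a < b" by auto
    have db: "(K-1) * card T \<le> (K-1) * depth T (Gr m n) + 2*n" by (rule depth_bound[OF fw K2])
    have cT: "card T = n - card S" using S by (simp add: T_def card_Diff_subset finite_subset)
    have cTr: "real (card T) \<ge> real n - real e" using cT S by (simp add: of_nat_diff)
    show "d \<le> depth ({0..<n} - S) (Gr m n)"
    proof (rule ccontr)
      assume "\<not> d \<le> depth ({0..<n} - S) (Gr m n)"
      then have dd: "real (depth T (Gr m n)) + 1 \<le> real d" by (simp add: T_def)
      have dbr: "real (K-1) * real (card T) \<le> real (K-1) * real (depth T (Gr m n)) + 2 * real n"
        using db by (metis of_nat_add of_nat_le_iff of_nat_mult of_nat_numeral)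
      have g: "\<epsilon> * real n + 1 \<le> real (card T) - real (depth T (Gr m n))"
        using cTr dd ed by (simp add: algebra_simps)
      have "real (K-1) * (\<epsilon> * real n + 1) \<le> real (K-1) * (real (card T) - real (depth T (Gr m n)))"
        using g by (intro mult_left_mono) auto
      moreover have "2 * real n \<le> (real (K-1) * \<epsilon>) * real n" by (rule mult_right_mono[OF Ke]) simp
      ultimately show False using final_arith dbr k1 by blast
    qed
  qed
  show ?thesis
  proof (intro exI[of _ "3 * real (3*m^2)"] exI[of _ "Gr m"] allI impI conjI)
    fix n :: nat assume n2: "2 \<le> n"
    show "is_dag {0..<n} (Gr m n)" by (rule Gr_dag[OF m2])
    show "\<forall>v \<in> {0..<n}. real (indegree (Gr m n) v) \<le> 3 * real (3*m^2) * ln (real n)"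
      using Gr_indeg[OF m2 n2] by blast
    fix e d :: nat assume "real e + real d \<le> (1 - \<epsilon>) * real n"
    then show "depth_robust {0..<n} (Gr m n) e d" by (rule main)
  qed
qed


end
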